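(* Let $(l_n)_{n\ge 1}$, $(r_n)_{n\ge 1}$ be real numbers with $l_n,r_n>0$ and $l_n+r_n=1$, let $k\ge 1$ be an integer, and let $(X_m)_{m\ge 0}$ be the birth-death chain with these probabilities and $X_0=k$; let $T_\Delta$ be its first hitting time of $0$, and assume $P(T_\Delta<\infty)=1$. Let $t_0=1$, $t_n=\frac{l_1\cdots l_n}{r_1\cdots r_n}$ for $n\ge1$, and $x_n=\sum_{i=0}^{n-1}t_i$. For a random time $T$ and $n\ge 1$, let $G_T^n$ denote the number of times $m\in\{0,\dots,T-1\}$ with $X_m=n$. Let $(T_m)_{m\ge1}$ be a non-decreasing sequence of stopping times with $E[T_m]<\infty$ and $T_m\to T_\Delta$ almost surely. Then for every $n\ge 1$, $$E[G_{T_\Delta}^n]=\lim_{m\to\infty}E[G_{T_m}^n]=\frac{\min(x_n,x_k)}{t_{n-1}l_n}.$$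
   Context: The birth-death chain: $(X_m)$ is a Markov chain on the nonnegative integers which from a state $n\ge 1$ moves to $n+1$ with probability $r_n$ and to $n-1$ with probability $l_n$, and for which $0$ is absorbing. Stopping times are with respect to the natural filtration of $(X_m)$. *)

theory Defs
  imports "HOL-Probability.Probability"
begin

definition bd_trans :: "(nat \<Rightarrow> real) \<Rightarrow> (nat \<Rightarrow> real) \<Rightarrow> nat \<Rightarrow> nat \<Rightarrow> real" where
  "bd_trans l r i j =
     (if i = 0 then (if j = 0 then 1 else 0)
      else if j = Suc i then r i
      else if Suc j = i then l i
      else 0)"

definition is_bd_chain ::
  "'a measure \<Rightarrow> (nat \<Rightarrow> real) \<Rightarrow> (nat \<Rightarrow> real) \<Rightarrow> nat \<Rightarrow> (nat \<Rightarrow> 'a \<Rightarrow> nat) \<Rightarrow> bool" where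
  "is_bd_chain M l r k X \<longleftrightarrow>
     (\<forall>m. X m \<in> measurable M (count_space UNIV)) \<and>
     measure M {\<omega> \<in> space M. X 0 \<omega> = k} = 1 \<and>
     (\<forall>m (s :: nat \<Rightarrow> nat) j.
        measure M {\<omega> \<in> space M. (\<forall>i\<le>m. X i \<omega> = s i) \<and> X (Suc m) \<omega> = j}
        = measure M {\<omega> \<in> space M. \<forall>i\<le>m. X i \<omega> = s i} * bd_trans l r (s m) j)"

definition nat_stopping_time :: "'a measure \<Rightarrow> (nat \<Rightarrow> 'a \<Rightarrow> nat) \<Rightarrow> ('a \<Rightarrow> enat) \<Rightarrow> bool" where
  "nat_stopping_time M X T \<longleftrightarrow>
     (\<forall>m::nat. {\<omega> \<in> space M. T \<omega> = enat m} \<in>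
        sigma_sets (space M) {{\<omega> \<in> space M. X i \<omega> = s} | i s. i \<le> m})"

definition hit0 :: "(nat \<Rightarrow> 'a \<Rightarrow> nat) \<Rightarrow> 'a \<Rightarrow> enat" where
  "hit0 X \<omega> = (if \<exists>m. X m \<omega> = 0 then enat (LEAST m. X m \<omega> = 0) else \<infinity>)"

definition visits :: "(nat \<Rightarrow> 'a \<Rightarrow> nat) \<Rightarrow> ('a \<Rightarrow> enat) \<Rightarrow> nat \<Rightarrow> 'a \<Rightarrow> ennreal" where
  "visits X T n \<omega> = (\<Sum>m. if enat m < T \<omega> \<and> X m \<omega> = n then 1 else 0)"

definition bd_t :: "(nat \<Rightarrow> real) \<Rightarrow> (nat \<Rightarrow> real) \<Rightarrow> nat \<Rightarrow> real" where
  "bd_t l r n = (\<Prod>i\<in>{1..n}. l i) / (\<Prod>i\<in>{1..n}. r i)"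

definition bd_x :: "(nat \<Rightarrow> real) \<Rightarrow> (nat \<Rightarrow> real) \<Rightarrow> nat \<Rightarrow> real" where
  "bd_x l r n = (\<Sum>i<n. bd_t l r i)"

end

theory Submission
  imports Defs
begin
locale bdc = prob_space M for M :: "'a measure" +
  fixes l r :: "nat \<Rightarrow> real" and k :: nat and X :: "nat \<Rightarrow> 'a \<Rightarrow> nat"
  assumes lpos: "\<And>n. n \<ge> 1 \<Longrightarrow> l n > 0"
    and rpos: "\<And>n. n \<ge> 1 \<Longrightarrow> r n > 0"
    and lr1: "\<And>n. n \<ge> 1 \<Longrightarrow> l n + r n = 1"
    and k1: "k \<ge> 1"
    and chain: "is_bd_chain M l r k X"
begin

lemma Xmeas[measurable]: "X m \<in> measurable M (count_space UNIV)"
  using chain unfolding is_bd_chain_def by auto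

lemma markov: "measure M {\<omega> \<in> space M. (\<forall>i\<le>m. X i \<omega> = s i) \<and> X (Suc m) \<omega> = j}
        = measure M {\<omega> \<in> space M. \<forall>i\<le>m. X i \<omega> = s i} * bd_trans l r (s m) j"
  using chain unfolding is_bd_chain_def by blast

lemma trans_nonneg: "bd_trans l r i j \<ge> 0"
  using lpos[of i] rpos[of i] unfolding bd_trans_def by auto

definition Xs :: "nat \<Rightarrow> 'a \<Rightarrow> nat list" where
  "Xs m \<omega> = map (\<lambda>i. X i \<omega>) [0..<Suc m]"

lemma Xs_len[simp]: "length (Xs m \<omega>) = Suc m"
  unfolding Xs_def by (simp only: length_map length_upt diff_zero)

lemma Xs_nth[simp]: "i \<le> m \<Longrightarrow> Xs m \<omega> ! i = X i \<omega>"
  unfolding Xs_def by (subst nth_map) (simp_all only: length_upt nth_upt, simp_all)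

lemma Xs_eq: "length s = Suc m \<Longrightarrow> (Xs m \<omega> = s) = (\<forall>i\<le>m. X i \<omega> = s ! i)"
  by (simp only: list_eq_iff_nth_eq Xs_len) (auto simp: less_Suc_eq_le)

lemma sets_path[measurable]: "{\<omega> \<in> space M. \<forall>i\<le>m. X i \<omega> = s i} \<in> sets M"
  by measurable

lemma sets_Xs: "{\<omega> \<in> space M. Xs m \<omega> = s} \<in> sets M"
proof (cases "length s = Suc m")
  case True
  then have "{\<omega> \<in> space M. Xs m \<omega> = s} = {\<omega> \<in> space M. \<forall>i\<le>m. X i \<omega> = s ! i}"
    using Xs_eq[OF True] by blast
  then show ?thesis using sets_path[of m "\<lambda>i. s ! i"] by simp
next
  case False
  then have "Xs m \<omega> \<noteq> s" for \<omega> by (metis Xs_len)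
  then have "{\<omega> \<in> space M. Xs m \<omega> = s} = {}" by blast
  then show ?thesis by (metis sets.empty_sets)
qed

lemma sets_Xs_in: "{\<omega> \<in> space M. Xs m \<omega> \<in> E} \<in> sets M"
proof -
  have "{\<omega> \<in> space M. Xs m \<omega> \<in> E} = (\<Union>s\<in>E. {\<omega> \<in> space M. Xs m \<omega> = s})" by auto
  also have "\<dots> \<in> sets M"
    by (rule sets.countable_UN''[OF countable_subset[OF subset_UNIV countableI_type] sets_Xs])
  finally show ?thesis .
qed

lemma onestep:
  assumes E: "\<And>s. s \<in> E \<Longrightarrow> length s = Suc m \<and> s ! m = i"
  shows "measure M {\<omega>\<in>space M. Xs m \<omega> \<in> E \<and> X (Suc m) \<omega> = j}
       = measure M {\<omega>\<in>space M. Xs m \<omega> \<in> E} * bd_trans l r i j"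
proof -
  define A where "A s = {\<omega>\<in>space M. Xs m \<omega> = s}" for s
  define B where "B s = {\<omega>\<in>space M. Xs m \<omega> = s \<and> X (Suc m) \<omega> = j}" for s
  have A[measurable]: "A s \<in> sets M" for s unfolding A_def by (rule sets_Xs)
  have B[measurable]: "B s \<in> sets M" for s
  proof -
    have "B s = A s \<inter> {\<omega>\<in>space M. X (Suc m) \<omega> = j}" unfolding A_def B_def by auto
    then show ?thesis using A by simp
  qed
  have eB: "measure M (B s) = measure M (A s) * bd_trans l r i j" if "s \<in> E" for s
  proof -
    have len: "length s = Suc m" and sm: "s ! m = i" using E[OF that] by auto
    have "B s = {\<omega> \<in> space M. (\<forall>i\<le>m. X i \<omega> = s ! i) \<and> X (Suc m) \<omega> = j}"
      unfolding B_def using Xs_eq[OF len] by auto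
    moreover have "A s = {\<omega> \<in> space M. (\<forall>i\<le>m. X i \<omega> = s ! i)}"
      unfolding A_def using Xs_eq[OF len] by auto
    ultimately show ?thesis using markov[of m "\<lambda>i. s ! i" j] sm by simp
  qed
  have cE: "countable E" by (rule countable_subset[OF subset_UNIV]) simp
  have dA: "disjoint_family_on A E" unfolding A_def disjoint_family_on_def by auto
  have dB: "disjoint_family_on B E" unfolding B_def disjoint_family_on_def by auto
  have UA: "{\<omega>\<in>space M. Xs m \<omega> \<in> E} = (\<Union>(A ` E))" unfolding A_def by auto
  have UB: "{\<omega>\<in>space M. Xs m \<omega> \<in> E \<and> X (Suc m) \<omega> = j} = (\<Union>(B ` E))" unfolding B_def by auto
  have "emeasure M (\<Union>(B ` E)) = (\<integral>\<^sup>+s. emeasure M (B s) \<partial>count_space E)"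
    by (rule emeasure_UN_countable[OF B cE dB])
  also have "\<dots> = (\<integral>\<^sup>+s. emeasure M (A s) * ennreal (bd_trans l r i j) \<partial>count_space E)"
    by (intro nn_integral_cong) (simp add: emeasure_eq_measure eB ennreal_mult'' trans_nonneg)
  also have "\<dots> = (\<integral>\<^sup>+s. emeasure M (A s) \<partial>count_space E) * ennreal (bd_trans l r i j)"
    by (rule nn_integral_multc) simp
  also have "(\<integral>\<^sup>+s. emeasure M (A s) \<partial>count_space E) = emeasure M (\<Union>(A ` E))"
    by (rule emeasure_UN_countable[OF A cE dA, symmetric])
  finally have "ennreal (measure M (\<Union>(B ` E))) = ennreal (measure M (\<Union>(A ` E)) * bd_trans l r i j)"
    by (simp add: emeasure_eq_measure ennreal_mult'' trans_nonneg)
  then show ?thesis unfolding UA UB by (simp add: trans_nonneg)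
qed

lemma Xs_set: "0 \<notin> set (Xs m \<omega>) \<longleftrightarrow> (\<forall>i\<le>m. X i \<omega> \<noteq> 0)"
  by (simp only: in_set_conv_nth Xs_len) (auto simp: less_Suc_eq_le)

lemma onestep':
  "measure M {\<omega>\<in>space M. Q (Xs m \<omega>) \<and> X m \<omega> = i \<and> X (Suc m) \<omega> = j}
       = measure M {\<omega>\<in>space M. Q (Xs m \<omega>) \<and> X m \<omega> = i} * bd_trans l r i j"
proof -
  define E where "E = {s. Q s \<and> length s = Suc m \<and> s ! m = i}"
  have "{\<omega>\<in>space M. Q (Xs m \<omega>) \<and> X m \<omega> = i \<and> X (Suc m) \<omega> = j}
     = {\<omega>\<in>space M. Xs m \<omega> \<in> E \<and> X (Suc m) \<omega> = j}"
    "{\<omega>\<in>space M. Q (Xs m \<omega>) \<and> X m \<omega> = i} = {\<omega>\<in>space M. Xs m \<omega> \<in> E}"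
    unfolding E_def by auto
  then show ?thesis using onestep[of E m i j] unfolding E_def by auto
qed

lemma sets_XsQ[measurable]: "{\<omega>\<in>space M. Q (Xs m \<omega>)} \<in> sets M"
  using sets_Xs_in[of m "Collect Q"] by simp

lemma step_i:
  assumes i: "i \<ge> 1"
  shows "AE \<omega> in M. X m \<omega> = i \<longrightarrow> X (Suc m) \<omega> = i - 1 \<or> X (Suc m) \<omega> = Suc i"
proof -
  define S where "S = {\<omega>\<in>space M. X m \<omega> = i}"
  define S1 where "S1 = {\<omega>\<in>space M. X m \<omega> = i \<and> X (Suc m) \<omega> = i - 1}"
  define S2 where "S2 = {\<omega>\<in>space M. X m \<omega> = i \<and> X (Suc m) \<omega> = Suc i}"
  define N where "N = {\<omega>\<in>space M. X m \<omega> = i \<and> \<not> (X (Suc m) \<omega> = i - 1 \<or> X (Suc m) \<omega> = Suc i)}"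
  have [measurable]: "S \<in> sets M" "S1 \<in> sets M" "S2 \<in> sets M" "N \<in> sets M"
    unfolding S_def S1_def S2_def N_def by measurable
  have "S = (S1 \<union> S2) \<union> N" unfolding S_def S1_def S2_def N_def by auto
  moreover have "(S1 \<union> S2) \<inter> N = {}" "S1 \<inter> S2 = {}" unfolding S1_def S2_def N_def using i by auto
  ultimately have "measure M S = measure M S1 + measure M S2 + measure M N"
    by (simp add: finite_measure_Union)
  moreover have "bd_trans l r i (i - 1) = l i" using i unfolding bd_trans_def by auto
  moreover have "measure M S1 = measure M S * bd_trans l r i (i - 1)"
    using onestep'[of "\<lambda>_. True" m i "i - 1"] unfolding S_def S1_def by simp
  moreover have "measure M S2 = measure M S * r i"
    using onestep'[of "\<lambda>_. True" m i "Suc i"] i unfolding S_def S2_def bd_trans_def by simp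
  ultimately have "measure M N = measure M S * (1 - (l i + r i))" by (simp add: algebra_simps)
  then have "measure M N = 0" using lr1[OF i] by simp
  then have nN: "N \<in> null_sets M" by (simp add: emeasure_eq_measure null_setsI)
  show ?thesis using AE_not_in[OF nN] AE_space by eventually_elim (auto simp: N_def)
qed

lemma AE_step: "AE \<omega> in M. \<forall>m. X m \<omega> \<noteq> 0 \<longrightarrow> X (Suc m) \<omega> = X m \<omega> - 1 \<or> X (Suc m) \<omega> = Suc (X m \<omega>)"
proof -
  have "\<forall>m i. AE \<omega> in M. X m \<omega> = i \<and> i \<ge> 1 \<longrightarrow> X (Suc m) \<omega> = i - 1 \<or> X (Suc m) \<omega> = Suc i"
  proof (intro allI)
    fix m i :: nat
    show "AE \<omega> in M. X m \<omega> = i \<and> i \<ge> 1 \<longrightarrow> X (Suc m) \<omega> = i - 1 \<or> X (Suc m) \<omega> = Suc i"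
      using step_i[of i m] by (cases "i \<ge> 1") auto
  qed
  then have "\<forall>m. AE \<omega> in M. \<forall>i. X m \<omega> = i \<and> i \<ge> 1 \<longrightarrow> X (Suc m) \<omega> = i - 1 \<or> X (Suc m) \<omega> = Suc i"
    by (intro allI, subst AE_all_countable, blast)
  then have "AE \<omega> in M. \<forall>m i. X m \<omega> = i \<and> i \<ge> 1 \<longrightarrow> X (Suc m) \<omega> = i - 1 \<or> X (Suc m) \<omega> = Suc i"
    by (subst AE_all_countable, blast)
  then show ?thesis by eventually_elim auto
qed

lemma AE_X0: "AE \<omega> in M. X 0 \<omega> = k"
proof -
  have "prob {\<omega> \<in> space M. X 0 \<omega> = k} = 1" using chain unfolding is_bd_chain_def by auto
  from AE_prob_1[OF this] show ?thesis by eventually_elim auto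
qed

definition alive :: "nat \<Rightarrow> 'a \<Rightarrow> bool" where
  "alive m \<omega> \<longleftrightarrow> (\<forall>i\<le>m. X i \<omega> \<noteq> 0)"

definition p :: "nat \<Rightarrow> nat \<Rightarrow> real" where
  "p m j = measure M {\<omega>\<in>space M. alive m \<omega> \<and> X m \<omega> = j}"

definition F :: "nat \<Rightarrow> nat \<Rightarrow> real" where
  "F m n = measure M {\<omega>\<in>space M. alive m \<omega> \<and> n \<le> X m \<omega>}"

lemma alive_Suc: "alive (Suc m) \<omega> \<longleftrightarrow> alive m \<omega> \<and> X (Suc m) \<omega> \<noteq> 0"
  unfolding alive_def by (auto simp: le_Suc_eq)

lemma alive_0: "alive 0 \<omega> \<longleftrightarrow> X 0 \<omega> \<noteq> 0"
  unfolding alive_def by auto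

lemma sets_alive[measurable]: "Measurable.pred M (alive m)"
  unfolding alive_def by measurable

lemma pstep: "measure M {\<omega>\<in>space M. alive m \<omega> \<and> X m \<omega> = i \<and> X (Suc m) \<omega> = j} = p m i * bd_trans l r i j"
  using onestep'[of "\<lambda>s. 0 \<notin> set s" m i j] unfolding p_def by (simp add: Xs_set alive_def)

lemma F_split: "F m n = F m (Suc n) + p m n"
proof -
  have "{\<omega>\<in>space M. alive m \<omega> \<and> n \<le> X m \<omega>} = {\<omega>\<in>space M. alive m \<omega> \<and> Suc n \<le> X m \<omega>} \<union> {\<omega>\<in>space M. alive m \<omega> \<and> X m \<omega> = n}"
    by auto
  then show ?thesis unfolding F_def p_def by (subst finite_measure_Union[symmetric]) auto
qed

lemma F_step:
  assumes n: "n \<ge> 1"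
  shows "F (Suc m) n = F m (Suc n) + p m n * r n + (if n \<ge> 2 then p m (n - 1) * r (n - 1) else 0)"
proof -
  define L where "L = {\<omega>\<in>space M. alive (Suc m) \<omega> \<and> n \<le> X (Suc m) \<omega>}"
  define A1 where "A1 = {\<omega>\<in>space M. alive m \<omega> \<and> Suc n \<le> X m \<omega>}"
  define A2 where "A2 = {\<omega>\<in>space M. alive m \<omega> \<and> X m \<omega> = n \<and> X (Suc m) \<omega> = Suc n}"
  define A3 where "A3 = {\<omega>\<in>space M. n \<ge> 2 \<and> alive m \<omega> \<and> X m \<omega> = n - 1 \<and> X (Suc m) \<omega> = n}"
  have [measurable]: "L \<in> sets M" "A1 \<in> sets M" "A2 \<in> sets M" "A3 \<in> sets M"
    unfolding L_def A1_def A2_def A3_def by measurable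
  have "AE \<omega> in M. \<omega> \<in> L \<longleftrightarrow> \<omega> \<in> (A1 \<union> A2) \<union> A3"
    using AE_step
  proof eventually_elim
    case (elim \<omega>)
    then have st: "alive m \<omega> \<Longrightarrow> X (Suc m) \<omega> = X m \<omega> - 1 \<or> X (Suc m) \<omega> = Suc (X m \<omega>)"
      unfolding alive_def by auto
    have ar: "\<And>a b::nat. a \<noteq> 0 \<Longrightarrow> (b = a - 1 \<or> b = Suc a) \<Longrightarrow>
      (b \<noteq> 0 \<and> n \<le> b) \<longleftrightarrow> (Suc n \<le> a \<or> (a = n \<and> b = Suc n) \<or> (n \<ge> 2 \<and> a = n - 1 \<and> b = n))"
      using n by arith
    show ?case
    proof (cases "alive m \<omega>")
      case True
      then have a0: "X m \<omega> \<noteq> 0" unfolding alive_def by blast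
      have e: "(X (Suc m) \<omega> \<noteq> 0 \<and> n \<le> X (Suc m) \<omega>) \<longleftrightarrow> (Suc n \<le> X m \<omega> \<or> (X m \<omega> = n \<and> X (Suc m) \<omega> = Suc n)
          \<or> (n \<ge> 2 \<and> X m \<omega> = n - 1 \<and> X (Suc m) \<omega> = n))"
        by (rule ar[OF a0 st[OF True]])
      show ?thesis unfolding L_def A1_def A2_def A3_def alive_Suc using True e by blast
    next
      case False
      show ?thesis unfolding L_def A1_def A2_def A3_def alive_Suc using False by blast
    qed
  qed
  then have "F (Suc m) n = measure M ((A1 \<union> A2) \<union> A3)"
    unfolding F_def L_def[symmetric] by (intro measure_eq_AE) auto
  also have "\<dots> = measure M A1 + measure M A2 + measure M A3"
    by (subst finite_measure_Union; (subst finite_measure_Union)?) (auto simp: A1_def A2_def A3_def)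
  also have "measure M A1 = F m (Suc n)" unfolding A1_def F_def ..
  also have "measure M A2 = p m n * r n"
    using pstep[of m n "Suc n"] unfolding A2_def bd_trans_def using n by simp
  also have "measure M A3 = (if n \<ge> 2 then p m (n - 1) * r (n - 1) else 0)"
  proof (cases "n \<ge> 2")
    case True
    then have "A3 = {\<omega>\<in>space M. alive m \<omega> \<and> X m \<omega> = n - 1 \<and> X (Suc m) \<omega> = Suc (n - 1)}"
      unfolding A3_def by auto
    then show ?thesis using pstep[of m "n - 1" "Suc (n - 1)"] True unfolding bd_trans_def by simp
  next
    case False
    then have "A3 = {}" unfolding A3_def by auto
    then show ?thesis using False by simp
  qed
  finally show ?thesis .
qed

lemma F_step2:
  assumes n: "n \<ge> 1"
  shows "F (Suc m) n = F m n - l n * p m n + (if n \<ge> 2 then r (n - 1) * p m (n - 1) else 0)"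
proof -
  have "l n * p m n + r n * p m n = p m n" by (metis distrib_right lr1 n mult_1)
  then show ?thesis using F_step[OF n, of m] F_split[of m n] by (simp add: algebra_simps)
qed

definition S :: "nat \<Rightarrow> nat \<Rightarrow> real" where
  "S N n = (\<Sum>m<N. p m n)"

lemma F_tele:
  assumes n: "n \<ge> 1"
  shows "F N n = F 0 n - l n * S N n + (if n \<ge> 2 then r (n - 1) * S N (n - 1) else 0)"
  by (induction N) (auto simp: S_def F_step2[OF n] algebra_simps)

lemma F_0: "F 0 n = (if n \<le> k then 1 else 0)"
proof -
  have "F 0 n = measure M {\<omega>\<in>space M. n \<le> k}"
    unfolding F_def using AE_X0 k1 by (intro measure_eq_AE) (auto simp: alive_0)
  then show ?thesis by (cases "n \<le> k") (auto simp: prob_space)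
qed

lemma F_lim:
  assumes hit: "AE \<omega> in M. hit0 X \<omega> < \<infinity>" and n: "n \<ge> 1"
  shows "(\<lambda>N. F N n) \<longlonglongrightarrow> 0"
proof -
  define A where "A N = {\<omega>\<in>space M. alive N \<omega>}" for N
  have "(\<lambda>N. measure M (A N)) \<longlonglongrightarrow> measure M (\<Inter>N. A N)"
    by (rule finite_Lim_measure_decseq) (auto simp: A_def decseq_def alive_def)
  moreover have "measure M (\<Inter>N. A N) = measure M {}"
  proof (rule measure_eq_AE)
    show "AE \<omega> in M. \<omega> \<in> (\<Inter>N. A N) \<longleftrightarrow> \<omega> \<in> {}"
      using hit
    proof eventually_elim
      case (elim \<omega>)
      then obtain m where "X m \<omega> = 0" unfolding hit0_def by (auto split: if_splits)
      then show ?case unfolding A_def alive_def by auto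
    qed
    show "(\<Inter>N. A N) \<in> sets M" unfolding A_def by measurable
  qed auto
  ultimately have lim: "(\<lambda>N. measure M (A N)) \<longlonglongrightarrow> 0" by simp
  have le: "F N n \<le> measure M (A N)" for N
    unfolding F_def A_def by (intro finite_measure_mono) auto
  show ?thesis
    by (rule tendsto_sandwich[OF always_eventually always_eventually tendsto_const lim])
      (use le in \<open>auto simp: F_def\<close>)
qed

lemma t_pos: "bd_t l r n > 0"
  unfolding bd_t_def using lpos rpos by (auto intro!: divide_pos_pos prod_pos)

lemma t_0: "bd_t l r 0 = 1" unfolding bd_t_def by simp

lemma t_Suc: "bd_t l r (Suc n) = bd_t l r n * l (Suc n) / r (Suc n)"
  unfolding bd_t_def by (simp add: prod.nat_ivl_Suc')

lemma x_Suc: "bd_x l r (Suc n) = bd_x l r n + bd_t l r n"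
  unfolding bd_x_def by simp

lemma x_mono: "m \<le> n \<Longrightarrow> bd_x l r m \<le> bd_x l r n"
  unfolding bd_x_def using t_pos by (intro sum_mono2) (auto intro: less_imp_le)

definition g :: "nat \<Rightarrow> real" where
  "g n = min (bd_x l r n) (bd_x l r k) / (bd_t l r (n - 1) * l n)"

lemma g_1: "g 1 = 1 / l 1"
proof -
  have "bd_x l r 1 = 1" unfolding bd_x_def by (simp add: t_0)
  moreover have "bd_x l r 1 \<le> bd_x l r k" using k1 by (rule x_mono)
  ultimately show ?thesis unfolding g_def by (simp add: t_0)
qed

lemma g_Suc:
  assumes n: "n \<ge> 1"
  shows "g (Suc n) = ((if Suc n \<le> k then 1 else 0) + r n * g n) / l (Suc n)"
proof -
  obtain n' where n': "n = Suc n'" using n by (cases n) auto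
  have tn: "bd_t l r n = bd_t l r (n - 1) * l n / r n" using t_Suc[of n'] n' by simp
  have pos: "bd_t l r (n - 1) > 0" "l n > 0" "r n > 0" "bd_t l r n > 0" "l (Suc n) > 0"
    using t_pos lpos rpos n by auto
  have rg: "r n * g n = min (bd_x l r n) (bd_x l r k) / bd_t l r n"
    unfolding g_def tn using pos by (simp add: field_simps)
  have key: "(if Suc n \<le> k then 1 else 0) * bd_t l r n + min (bd_x l r n) (bd_x l r k)
      = min (bd_x l r (Suc n)) (bd_x l r k)"
  proof (cases "Suc n \<le> k")
    case True
    then have "bd_x l r (Suc n) \<le> bd_x l r k" by (rule x_mono)
    then show ?thesis using True x_Suc[of n] pos by auto
  next
    case False
    then have "bd_x l r k \<le> bd_x l r n" by (intro x_mono) auto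
    then show ?thesis using False x_Suc[of n] pos by auto
  qed
  show ?thesis
    unfolding rg g_def[of "Suc n"] using pos key[symmetric] by (simp add: field_simps)
qed

lemma S_lim:
  assumes hit: "AE \<omega> in M. hit0 X \<omega> < \<infinity>" and n: "n \<ge> 1"
  shows "(\<lambda>N. S N n) \<longlonglongrightarrow> g n"
  using n
proof (induction n)
  case 0 then show ?case by simp
next
  case (Suc n)
  have lS: "l (Suc n) > 0" using lpos by simp
  have eq: "S N (Suc n) = (F 0 (Suc n) - F N (Suc n) + (if Suc n \<ge> 2 then r n * S N n else 0)) / l (Suc n)" for N
    using F_tele[of "Suc n" N] lS by (simp add: field_simps)
  show ?case
  proof (cases "n = 0")
    case True
    have "(\<lambda>N. (F 0 (Suc n) - F N (Suc n) + (if Suc n \<ge> 2 then r n * S N n else 0)) / l (Suc n))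
       \<longlonglongrightarrow> (F 0 1 - 0 + 0) / l 1"
      using True lS by (intro tendsto_intros F_lim[OF hit]) auto
    then show ?thesis unfolding eq using True k1 lpos[of "Suc 0"] g_1[unfolded One_nat_def] by (simp add: F_0)
  next
    case False
    then have n1: "n \<ge> 1" by simp
    have "(\<lambda>N. (F 0 (Suc n) - F N (Suc n) + r n * S N n) / l (Suc n))
       \<longlonglongrightarrow> (F 0 (Suc n) - 0 + r n * g n) / l (Suc n)"
      using lS by (intro tendsto_intros F_lim[OF hit] Suc.IH n1) auto
    then show ?thesis unfolding eq using n1 g_Suc[OF n1] by (simp add: F_0)
  qed
qed

lemma hit0_less: "enat m < hit0 X \<omega> \<longleftrightarrow> alive m \<omega>"
proof (cases "\<exists>j. X j \<omega> = 0")
  case True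
  have L: "X (LEAST j. X j \<omega> = 0) \<omega> = 0" using True by (rule LeastI_ex)
  show ?thesis
  proof
    assume "enat m < hit0 X \<omega>"
    then have "m < (LEAST j. X j \<omega> = 0)" using True unfolding hit0_def by simp
    then show "alive m \<omega>" unfolding alive_def by (meson le_less_trans not_less_Least)
  next
    assume a: "alive m \<omega>"
    show "enat m < hit0 X \<omega>"
    proof (rule ccontr)
      assume "\<not> enat m < hit0 X \<omega>"
      then have "(LEAST j. X j \<omega> = 0) \<le> m" using True unfolding hit0_def by simp
      then show False using a L unfolding alive_def by blast
    qed
  qed
next
  case False
  then have "hit0 X \<omega> = \<infinity>" unfolding hit0_def by simp
  then show ?thesis using False unfolding alive_def by auto
qed

lemma int_hit:
  assumes hit: "AE \<omega> in M. hit0 X \<omega> < \<infinity>" and n: "n \<ge> 1"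
  shows "(\<integral>\<^sup>+ \<omega>. visits X (hit0 X) n \<omega> \<partial>M) = ennreal (g n)"
proof -
  define B where "B m = {\<omega>\<in>space M. alive m \<omega> \<and> X m \<omega> = n}" for m
  have B[measurable]: "B m \<in> sets M" for m unfolding B_def by measurable
  have "(\<integral>\<^sup>+ \<omega>. visits X (hit0 X) n \<omega> \<partial>M) = (\<integral>\<^sup>+ \<omega>. (\<Sum>m. indicator (B m) \<omega>) \<partial>M)"
    unfolding visits_def by (intro nn_integral_cong suminf_cong) (auto simp: B_def hit0_less indicator_def)
  also have "\<dots> = (\<Sum>m. \<integral>\<^sup>+ \<omega>. indicator (B m) \<omega> \<partial>M)"
    by (rule nn_integral_suminf) simp
  also have "\<dots> = (\<Sum>m. ennreal (p m n))"
    by (simp add: B_def p_def emeasure_eq_measure)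
  also have "\<dots> = ennreal (\<Sum>m. p m n)"
  proof -
    have "(\<lambda>m. p m n) sums g n" unfolding sums_def using S_lim[OF hit n] by (simp add: S_def)
    then show ?thesis by (intro suminf_ennreal2) (auto simp: p_def sums_summable)
  qed
  also have "(\<Sum>m. p m n) = g n"
    using S_lim[OF hit n] unfolding S_def by (intro sums_unique[symmetric]) (simp add: sums_def)
  finally show ?thesis .
qed

lemma stop_meas:
  assumes st: "nat_stopping_time M X T"
  shows "{\<omega>\<in>space M. enat j < T \<omega>} \<in> sets M"
proof -
  have eq: "{\<omega>\<in>space M. T \<omega> = enat i} \<in> sets M" for i
  proof -
    have "{{\<omega> \<in> space M. X i' \<omega> = s} | i' s. i' \<le> i} \<subseteq> sets M" by auto
    then have "sigma_sets (space M) {{\<omega> \<in> space M. X i' \<omega> = s} | i' s. i' \<le> i} \<subseteq> sets M"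
      by (rule sets.sigma_sets_subset)
    then show ?thesis using st unfolding nat_stopping_time_def by blast
  qed
  have "{\<omega>\<in>space M. enat j < T \<omega>} = space M - (\<Union>i\<in>{..j}. {\<omega>\<in>space M. T \<omega> = enat i})"
  proof (intro set_eqI iffI)
    fix \<omega> assume "\<omega> \<in> space M - (\<Union>i\<in>{..j}. {\<omega>\<in>space M. T \<omega> = enat i})"
    then show "\<omega> \<in> {\<omega>\<in>space M. enat j < T \<omega>}"
      by (cases "T \<omega>") (auto simp: not_less)
  qed auto
  also have "\<dots> \<in> sets M" using eq by auto
  finally show ?thesis .
qed

lemma visits_meas:
  assumes st: "nat_stopping_time M X T"
  shows "visits X T n \<in> borel_measurable M"
proof -
  define B where "B j = {\<omega>\<in>space M. enat j < T \<omega> \<and> X j \<omega> = n}" for j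
  have B[measurable]: "B j \<in> sets M" for j
  proof -
    have "B j = {\<omega>\<in>space M. enat j < T \<omega>} \<inter> {\<omega>\<in>space M. X j \<omega> = n}" unfolding B_def by auto
    then show ?thesis using stop_meas[OF st] by simp
  qed
  have meas: "(\<lambda>\<omega>. \<Sum>j. indicator (B j) \<omega> :: ennreal) \<in> borel_measurable M" by measurable
  have eq: "\<omega> \<in> space M \<Longrightarrow> visits X T n \<omega> = (\<Sum>j. indicator (B j) \<omega>)" for \<omega>
    unfolding visits_def B_def by (intro suminf_cong) (auto simp: indicator_def)
  show ?thesis using meas by (subst measurable_cong[OF eq]) auto
qed

lemma visits_mono: "(\<And>\<omega>. T \<omega> \<le> T' \<omega>) \<Longrightarrow> visits X T n \<omega> \<le> visits X T' n \<omega>"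
  unfolding visits_def
  by (intro suminf_le summableI) (auto intro: less_le_trans)

lemma eventually_enat:
  assumes "f \<longlonglongrightarrow> enat H"
  shows "eventually (\<lambda>m. f m = enat H) sequentially"
proof -
  have e1: "eventually (\<lambda>m. f m < enat (Suc H)) sequentially"
    using order_tendstoD(2)[OF assms] by simp
  show ?thesis
  proof (cases H)
    case 0
    show ?thesis using e1
    proof (rule eventually_mono)
      fix m assume "f m < enat (Suc H)"
      then show "f m = enat H" using 0 by (cases "f m") auto
    qed
  next
    case (Suc H')
    have e2: "eventually (\<lambda>m. enat H' < f m) sequentially"
      using order_tendstoD(1)[OF assms] Suc by simp
    from e1 e2 show ?thesis
    proof eventually_elim
      case (elim m)
      then show ?case using Suc by (cases "f m") auto
    qed
  qed
qed

lemma int_T: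
  assumes hit: "AE \<omega> in M. hit0 X \<omega> < \<infinity>"
    and st: "\<And>m. nat_stopping_time M X (T m)"
    and mono: "\<And>m \<omega>. T m \<omega> \<le> T (Suc m) \<omega>"
    and conv: "AE \<omega> in M. (\<lambda>m. T m \<omega>) \<longlonglongrightarrow> hit0 X \<omega>"
  shows "(\<lambda>m. \<integral>\<^sup>+ \<omega>. visits X (T m) n \<omega> \<partial>M) \<longlonglongrightarrow> (\<integral>\<^sup>+ \<omega>. visits X (hit0 X) n \<omega> \<partial>M)"
proof -
  define f where "f m = visits X (T m) n" for m
  have fm[measurable]: "f m \<in> borel_measurable M" for m unfolding f_def by (rule visits_meas[OF st])
  have inc: "incseq f"
    by (rule incseq_SucI) (auto simp: le_fun_def f_def intro!: visits_mono mono)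
  have incI: "incseq (\<lambda>m. integral\<^sup>N M (f m))"
    using inc by (auto simp: incseq_def intro!: nn_integral_mono simp: le_fun_def)
  have "(\<lambda>m. integral\<^sup>N M (f m)) \<longlonglongrightarrow> (SUP m. integral\<^sup>N M (f m))"
    by (rule LIMSEQ_SUP[OF incI])
  also have "(SUP m. integral\<^sup>N M (f m)) = (\<integral>\<^sup>+ \<omega>. (SUP m. f m \<omega>) \<partial>M)"
    by (rule nn_integral_monotone_convergence_SUP[OF inc fm, symmetric])
  also have "\<dots> = (\<integral>\<^sup>+ \<omega>. visits X (hit0 X) n \<omega> \<partial>M)"
  proof (rule nn_integral_cong_AE)
    show "AE \<omega> in M. (SUP m. f m \<omega>) = visits X (hit0 X) n \<omega>"
      using hit conv
    proof eventually_elim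
      case (elim \<omega>)
      then obtain H where H: "hit0 X \<omega> = enat H" by (cases "hit0 X \<omega>") auto
      have "eventually (\<lambda>m. T m \<omega> = enat H) sequentially"
        using elim(2) H by (intro eventually_enat) simp
      then have "eventually (\<lambda>m. f m \<omega> = visits X (hit0 X) n \<omega>) sequentially"
        by eventually_elim (simp add: f_def visits_def H)
      then have l1: "(\<lambda>m. f m \<omega>) \<longlonglongrightarrow> visits X (hit0 X) n \<omega>" by (rule tendsto_eventually)
      have "incseq (\<lambda>m. f m \<omega>)" using inc by (auto simp: incseq_def le_fun_def)
      then have l2: "(\<lambda>m. f m \<omega>) \<longlonglongrightarrow> (SUP m. f m \<omega>)" by (rule LIMSEQ_SUP)
      show ?case using LIMSEQ_unique[OF l2 l1] .
    qed
  qed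
  finally show ?thesis unfolding f_def .
qed

end

theorem lemma3:
  fixes M :: "'a measure" and l r :: "nat \<Rightarrow> real" and k :: nat
    and X :: "nat \<Rightarrow> 'a \<Rightarrow> nat" and T :: "nat \<Rightarrow> 'a \<Rightarrow> enat"
  assumes "prob_space M"
    and "\<And>n. n \<ge> 1 \<Longrightarrow> l n > 0"
    and "\<And>n. n \<ge> 1 \<Longrightarrow> r n > 0"
    and "\<And>n. n \<ge> 1 \<Longrightarrow> l n + r n = 1"
    and "k \<ge> 1"
    and "is_bd_chain M l r k X"
    and "AE \<omega> in M. hit0 X \<omega> < \<infinity>"
    and "\<And>m. nat_stopping_time M X (T m)"
    and "\<And>m \<omega>. T m \<omega> \<le> T (Suc m) \<omega>"
    and "\<And>m. (\<integral>\<^sup>+ \<omega>. ennreal_of_enat (T m \<omega>) \<partial>M) < \<infinity>"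
    and "AE \<omega> in M. (\<lambda>m. T m \<omega>) \<longlonglongrightarrow> hit0 X \<omega>"
    and "n \<ge> 1"
  shows "((\<integral>\<^sup>+ \<omega>. visits X (hit0 X) n \<omega> \<partial>M)
           = ennreal (min (bd_x l r n) (bd_x l r k) / (bd_t l r (n - 1) * l n))) \<and>
         ((\<lambda>m. \<integral>\<^sup>+ \<omega>. visits X (T m) n \<omega> \<partial>M)
           \<longlonglongrightarrow> ennreal (min (bd_x l r n) (bd_x l r k) / (bd_t l r (n - 1) * l n)))"
  proof -
  have B: "bdc M l r k X" unfolding bdc_def bdc_axioms_def using assms(1-6) by blast
  interpret bdc M l r k X by (rule B)
  have i: "(\<integral>\<^sup>+ \<omega>. visits X (hit0 X) n \<omega> \<partial>M) = ennreal (g n)"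
    by (rule int_hit[OF assms(7) assms(12)])
  have t: "(\<lambda>m. \<integral>\<^sup>+ \<omega>. visits X (T m) n \<omega> \<partial>M) \<longlonglongrightarrow> (\<integral>\<^sup>+ \<omega>. visits X (hit0 X) n \<omega> \<partial>M)"
    by (rule int_T[OF assms(7) assms(8) assms(9) assms(11)])
  show ?thesis using i t unfolding g_def by (intro conjI) (simp_all only:)
qed

end
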